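(* Under the density hypotheses below, for every $A>0$ there exist $C>0$ and $m'\in\mathbb{N}$ such that for all $m\ge m'$, every $k\in\mathbb{N}$ with $k\le A m^{5/8}$, every choice of types $\theta_1,\ldots,\theta_k\in\{1,\ldots,r\}$, and every permutation $\varrho=(j_1,\ldots,j_k)$ of $\{1,\ldots,k\}$, if $X_1,\ldots,X_k$ are independent with $X_i$ having density $\hat f_{\theta_i}$ on $I_m$, then $$\Big|\Pr\big(X_{j_1}<X_{j_2}<\cdots<X_{j_k}\big)-\frac{1}{k!}\Big|\le \frac{C\,m^{-1/8}}{k!}.$$
   Context: For $\theta\in\{1,\ldots,r\}$, $f_\theta$ is a probability density with $f_\theta(\mathrm{M})>0$ and $|f_\theta(x)-f_\theta(\mathrm{M})|\le c(x-\mathrm{M})^2$ for $x\in[\mathrm{M}-\varepsilon_1,\mathrm{M}+\varepsilon_1]$, for some $c\ge 0,\varepsilon_1>0$. Let $\varepsilon(m)=m^{-3/8}$, $I_m=[\mathrm{M}-\varepsilon(m),\mathrm{M}+\varepsilon(m)]$, $p_\theta=\int_{I_m}f_\theta$, and define the conditional density $\hat f_\theta(x)=f_\theta(x)/p_\theta$ for $x\in I_m$ (zero outside $I_m$). *)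

theory Defs
  imports "HOL-Probability.Probability"
begin

definition eps :: "nat \<Rightarrow> real" where
  "eps m = real m powr (-3/8)"

definition Iint :: "real \<Rightarrow> nat \<Rightarrow> real set" where
  "Iint M m = {M - eps m .. M + eps m}"

definition pmass :: "(real \<Rightarrow> real) \<Rightarrow> real \<Rightarrow> nat \<Rightarrow> real" where
  "pmass g M m = (LINT x:Iint M m|lborel. g x)"

definition cdens :: "(real \<Rightarrow> real) \<Rightarrow> real \<Rightarrow> nat \<Rightarrow> real \<Rightarrow> real" where
  "cdens g M m x = (if x \<in> Iint M m then g x / pmass g M m else 0)"

definition joint_law :: "(nat \<Rightarrow> real \<Rightarrow> real) \<Rightarrow> real \<Rightarrow> nat \<Rightarrow> nat \<Rightarrow> (nat \<Rightarrow> nat)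
    \<Rightarrow> (nat \<Rightarrow> real) measure" where
  "joint_law f M m k th =
     (\<Pi>\<^sub>M i\<in>{1..k}. density lborel (\<lambda>x. ennreal (cdens (f (th i)) M m x)))"

definition order_prob :: "(nat \<Rightarrow> real \<Rightarrow> real) \<Rightarrow> real \<Rightarrow> nat \<Rightarrow> nat \<Rightarrow> (nat \<Rightarrow> nat)
    \<Rightarrow> (nat \<Rightarrow> nat) \<Rightarrow> real" where
  "order_prob f M m k th \<rho> =
     measure (joint_law f M m k th)
       {x \<in> space (joint_law f M m k th). \<forall>i\<in>{1..<k}. x (\<rho> i) < x (\<rho> (Suc i))}"

end

theory Submission
  imports Defs
begin


definition chainS :: "(nat \<Rightarrow> real measure) \<Rightarrow> nat list \<Rightarrow> (real \<Rightarrow> bool) \<Rightarrow> (nat \<Rightarrow> real) set" where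
 "chainS N xs P = {x \<in> space (PiM (set xs) N). sorted_wrt (<) (map x xs) \<and> (\<forall>i\<in>set xs. P (x i))}"

lemma comp_meas:
  fixes N :: "nat \<Rightarrow> real measure"
  assumes "\<And>i. sets (N i) = sets borel" "i \<in> A"
  shows "(\<lambda>x. x i) \<in> borel_measurable (PiM A N)"
proof -
  have "(\<lambda>x. x i) \<in> measurable (PiM A N) (N i)" by (rule measurable_component_singleton[OF assms(2)])
  also have "measurable (PiM A N) (N i) = borel_measurable (PiM A N)"
    by (rule measurable_cong_sets) (auto simp: assms(1))
  finally show ?thesis .
qed

lemma sorted_meas:
  fixes N :: "nat \<Rightarrow> real measure"
  assumes "\<And>i. sets (N i) = sets borel" "set xs \<subseteq> A"
  shows "Measurable.pred (PiM A N) (\<lambda>x. sorted_wrt (<) (map x xs))"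
  using assms(2)
proof (induction xs)
  case Nil
  then show ?case by simp
next
  case (Cons b ys)
  have eq: "(\<lambda>x. sorted_wrt (<) (map x (b # ys))) = (\<lambda>x. (\<forall>i\<in>set ys. x b < x i) \<and> sorted_wrt (<) (map x ys))"
    by auto
  have mb: "(\<lambda>x. x b) \<in> borel_measurable (PiM A N)" using comp_meas[of N, OF assms(1)] Cons.prems by auto
  have mi: "\<And>i. i \<in> set ys \<Longrightarrow> (\<lambda>x. x i) \<in> borel_measurable (PiM A N)" using comp_meas[of N, OF assms(1)] Cons.prems by auto
  have ml: "Measurable.pred (PiM A N) (\<lambda>x. x b < x i)" if "i \<in> set ys" for i
    by (rule borel_measurable_pred_less[OF mb mi[OF that]])
  show ?case unfolding eq
    using Cons ml by (intro pred_intros_logic pred_intros_finite) auto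
qed

lemma chainS_sets:
  fixes N :: "nat \<Rightarrow> real measure"
  assumes "\<And>i. sets (N i) = sets borel" "Measurable.pred borel P"
  shows "chainS N xs P \<in> sets (PiM (set xs) N)"
proof -
  have "chainS N xs P = {x \<in> space (PiM (set xs) N). sorted_wrt (<) (map x xs) \<and> (\<forall>i\<in>set xs. P (x i))}"
    by (simp add: chainS_def)
  also have "\<dots> \<in> sets (PiM (set xs) N)"
  proof (rule predE, intro pred_intros_logic pred_intros_finite)
    show "Measurable.pred (PiM (set xs) N) (\<lambda>x. sorted_wrt (<) (map x xs))"
      by (rule sorted_meas[OF assms(1)]) auto
    fix i assume "i \<in> set xs"
    then have "(\<lambda>x. x i) \<in> borel_measurable (PiM (set xs) N)" using comp_meas[of N, OF assms(1)] by auto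
    then show "Measurable.pred (PiM (set xs) N) (\<lambda>x. P (x i))"
      using assms(2) by (simp add: measurable_compose[of _ _ borel])
  qed simp
  finally show ?thesis .
qed

lemma int_poly:
  fixes c H :: real assumes "c \<le> H"
  shows "(\<integral>\<^sup>+ y. ennreal (indicator {c<..H} y * (H - y)^n) \<partial>lborel) = ennreal ((H - c)^(Suc n) / Suc n)"
proof -
  have "(\<integral>\<^sup>+ y. ennreal (indicator {c<..H} y * (H - y)^n) \<partial>lborel) =
        (\<integral>\<^sup>+ y. ennreal ((H - y)^n) * indicator {c..H} y \<partial>lborel)"
    by (rule nn_integral_cong_AE) (use AE_lborel_singleton[of c] in \<open>eventually_elim, auto simp: indicator_def\<close>)
  also have "((\<lambda>x. - ((H - x) ^ Suc n / Suc n)) has_real_derivative (H - x) ^ n) (at x)" for x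
    by (rule derivative_eq_intros refl | simp)+
  hence "(\<integral>\<^sup>+ y. ennreal ((H - y)^n) * indicator {c..H} y \<partial>lborel) =
       ennreal (-((H - H) ^ Suc n / Suc n) - (-((H - c) ^ Suc n / Suc n)))"
    using assms by (intro nn_integral_FTC_Icc) auto
  also have "\<dots> = ennreal ((H - c)^(Suc n) / Suc n)" by simp
  finally show ?thesis .
qed

definition Vf :: "real \<Rightarrow> real \<Rightarrow> nat \<Rightarrow> real \<Rightarrow> real" where
  "Vf L H n lo = (max 0 (H - max lo L))^n / ((H - L)^n * fact n)"

lemma Vf_int:
  fixes L H lo :: real assumes LH: "L < H"
  shows "(\<integral>\<^sup>+ y. ennreal (indicator {L..H} y / (H - L) * indicator {lo<..} y * Vf L H n y) \<partial>lborel)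
     = ennreal (Vf L H (Suc n) lo)"
proof (cases "lo < H")
  case True
  define c where "c = max lo L"
  have cH: "c \<le> H" using True LH by (simp add: c_def)
  have "(\<integral>\<^sup>+ y. ennreal (indicator {L..H} y / (H - L) * indicator {lo<..} y * Vf L H n y) \<partial>lborel)
      = (\<integral>\<^sup>+ y. ennreal (1 / ((H - L)^(Suc n) * fact n)) * ennreal (indicator {c<..H} y * (H - y)^n) \<partial>lborel)"
  proof (rule nn_integral_cong_AE)
    show "AE y in lborel. ennreal (indicator {L..H} y / (H - L) * indicator {lo<..} y * Vf L H n y) =
         ennreal (1 / ((H - L)^(Suc n) * fact n)) * ennreal (indicator {c<..H} y * (H - y)^n)"
      using AE_lborel_singleton[of L]
    proof eventually_elim
      case (elim y)
      show ?case
      proof (cases "c < y \<and> y \<le> H")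
        case True
        then have "y \<in> {L..H}" "lo < y" "max y L = y" using LH by (auto simp: c_def)
        then show ?thesis using True LH
          by (simp add: Vf_def ennreal_mult[symmetric] indicator_def field_simps)
      next
        case False
        then have z0: "indicator {L..H} y / (H - L) * indicator {lo<..} y = (0::real)"
          using elim by (auto simp: indicator_def c_def)
        have z1: "indicator {c<..H} y = (0::real)" using False by (simp add: indicator_def)
        show ?thesis by (simp only: z0 z1 mult_zero_left mult_zero_right ennreal_0)
      qed
    qed
  qed
  also have "\<dots> = ennreal (1 / ((H - L)^(Suc n) * fact n)) * ennreal ((H - c)^(Suc n) / Suc n)"
    by (subst nn_integral_cmult) (auto simp: int_poly[OF cH])
  also have "\<dots> = ennreal (1 / ((H - L)^(Suc n) * fact n) * ((H - c)^(Suc n) / Suc n))"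
    using LH cH by (subst ennreal_mult) auto
  also have "1 / ((H - L)^(Suc n) * fact n) * ((H - c)^(Suc n) / Suc n) = Vf L H (Suc n) lo"
    using LH cH by (simp add: Vf_def c_def field_simps)
  
  finally show ?thesis .
next
  case False
  have "(\<integral>\<^sup>+ y. ennreal (indicator {L..H} y / (H - L) * indicator {lo<..} y * Vf L H n y) \<partial>lborel) = (\<integral>\<^sup>+ (y::real). 0 \<partial>lborel)"
    using False by (intro nn_integral_cong) (auto simp: indicator_def)
  then show ?thesis using False by (simp add: Vf_def)
qed

lemma core:
  fixes N :: "nat \<Rightarrow> real measure" and G :: "nat \<Rightarrow> real \<Rightarrow> real" and L H a b :: real
  assumes LH: "L < H"
    and Ndef: "\<And>i. N i = density lborel (\<lambda>x. ennreal (G i x))"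
    and Gm: "\<And>i. G i \<in> borel_measurable borel"
    and lowb: "\<And>i x. a * (indicator {L..H} x / (H - L)) \<le> G i x"
    and upb: "\<And>i x. G i x \<le> b * (indicator {L..H} x / (H - L))"
    and a0: "0 \<le> a"
  shows "distinct xs \<Longrightarrow> Measurable.pred borel P \<Longrightarrow> (\<forall>z\<in>{L..H}. P z \<longleftrightarrow> lo < z) \<Longrightarrow>
     ennreal (a ^ length xs * Vf L H (length xs) lo) \<le> emeasure (PiM (set xs) N) (chainS N xs P) \<and>
     emeasure (PiM (set xs) N) (chainS N xs P) \<le> ennreal (b ^ length xs * Vf L H (length xs) lo)"
proof (induction xs arbitrary: P lo)
  case Nil
  have "chainS N [] P = {\<lambda>_. undefined}" by (auto simp: chainS_def space_PiM)
  then show ?case by (simp add: Vf_def)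
next
  case (Cons j ys)
  note Gm[measurable]
  define n where "n = length ys"
  define A where "A = set ys"
  define D where "D = H - L"
  have D0: "D > 0" using LH by (simp add: D_def)
  have jA: "j \<notin> A" and dys: "distinct ys" using Cons.prems(1) by (auto simp: A_def)
  have finA: "finite A" by (simp add: A_def)
  have setsN: "\<And>i. sets (N i) = sets borel" by (simp add: Ndef)
  have spN: "\<And>i. space (N i) = UNIV" by (simp add: Ndef)
  have Gnn: "\<And>i x. 0 \<le> G i x"
    using lowb a0 LH by (metis divide_nonneg_pos indicator_pos_le mult_nonneg_nonneg order_trans diff_gt_0_iff_gt)
  have b0: "0 \<le> b"
  proof -
    have "a * (indicator {L..H} L / (H - L)) \<le> b * (indicator {L..H} L / (H - L))"
      using lowb[of L j] upb[of j L] by linarith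
    then have "a / (H - L) \<le> b / (H - L)" using LH by (simp add: indicator_def)
    then have "a \<le> b" using LH by (simp add: divide_right_mono_neg le_divide_eq)
    then show ?thesis using a0 by simp
  qed
  have Gout: "\<And>i y. y \<notin> {L..H} \<Longrightarrow> G i y = 0"
    using upb Gnn by (metis antisym indicator_simps(2) div_0 mult_zero_right)
  have Gin_up: "G i y \<le> b / D" if "y \<in> {L..H}" for i y
    using upb[of i y] that by (simp add: D_def)
  have Gin_low: "a / D \<le> G i y" if "y \<in> {L..H}" for i y
    using lowb[of y i] that by (simp add: D_def)
  have fin: "finite_measure (N i)" for i
  proof
    have "emeasure (N i) (space (N i)) = (\<integral>\<^sup>+ x. ennreal (G i x) \<partial>lborel)"
      by (simp add: Ndef) (subst emeasure_density; simp)
    also have "\<dots> \<le> (\<integral>\<^sup>+ x. ennreal (b / D) * indicator {L..H} x \<partial>lborel)"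
    proof (intro nn_integral_mono)
      fix x show "ennreal (G i x) \<le> ennreal (b / D) * indicator {L..H} x"
        by (cases "x \<in> {L..H}") (auto simp: Gout Gin_up ennreal_leI indicator_def)
    qed
    also have "\<dots> = ennreal (b / D) * emeasure lborel {L..H}"
      by (rule nn_integral_cmult_indicator) simp
    also have "\<dots> < \<infinity>" using LH by (simp add: ennreal_mult_less_top)
    finally show "emeasure (N i) (space (N i)) \<noteq> \<infinity>" by simp
  qed
  interpret product_sigma_finite N
    unfolding product_sigma_finite_def using fin by (simp add: finite_measure_def)
  define S where "S = chainS N (j # ys) P"
  define F where "F y = emeasure (PiM A N) (chainS N ys (\<lambda>z. P z \<and> y < z))" for y
  have Pm: "Measurable.pred borel P" by (rule Cons.prems(2))
  have Sm: "S \<in> sets (PiM (insert j A) N)"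
    using chainS_sets[of N P "j # ys", OF setsN Pm] by (simp add: S_def A_def)
  have Qm: "Measurable.pred borel (\<lambda>z. P z \<and> y < z)" for y using Pm by measurable
  have Qsets: "chainS N ys (\<lambda>z. P z \<and> y < z) \<in> sets (PiM A N)" for y
    using chainS_sets[of N _ ys, OF setsN Qm[of y]] by (simp add: A_def)
  have IH: "ennreal (a ^ n * Vf L H n (max lo y)) \<le> F y \<and> F y \<le> ennreal (b ^ n * Vf L H n (max lo y))" for y
    unfolding F_def n_def A_def
  proof (rule Cons.IH[OF dys Qm])
    show "\<forall>z\<in>{L..H}. (P z \<and> y < z) = (max lo y < z)" using Cons.prems(3) by auto
  qed
  have E: "emeasure (PiM (insert j A) N) S = (\<integral>\<^sup>+ y. ennreal (indicator {z. P z} y) * F y \<partial>N j)"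
  proof -
    have "emeasure (PiM (insert j A) N) S = (\<integral>\<^sup>+ x. indicator S x \<partial>PiM (insert j A) N)"
      using Sm by simp
    also have "\<dots> = (\<integral>\<^sup>+ y. \<integral>\<^sup>+ x. indicator S (x(j := y)) \<partial>PiM A N \<partial>N j)"
      using Sm finA jA by (intro product_nn_integral_insert_rev) auto
    also have "\<dots> = (\<integral>\<^sup>+ y. \<integral>\<^sup>+ x. ennreal (indicator {z. P z} y) * indicator (chainS N ys (\<lambda>z. P z \<and> y < z)) x \<partial>PiM A N \<partial>N j)"
    proof (intro nn_integral_cong)
      fix y x assume x: "x \<in> space (PiM A N)"
      have "x(j := y) \<in> space (PiM (insert j A) N)"
        using x by (auto simp: space_PiM PiE_def extensional_def spN)
      moreover have "map (x(j := y)) ys = map x ys" using jA by (simp add: A_def)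
      moreover have "\<forall>i\<in>set ys. (x(j := y)) i = x i" using jA by (auto simp: A_def)
      ultimately have m: "map (x(j := y)) ys = map x ys" and f: "\<forall>i\<in>set ys. (x(j := y)) i = x i"
        and sp: "x(j := y) \<in> space (PiM (insert j A) N)" by auto
      have s1: "sorted_wrt (<) (map (x(j := y)) (j # ys)) \<longleftrightarrow> (\<forall>i\<in>set ys. y < x i) \<and> sorted_wrt (<) (map x ys)"
      proof -
        have e: "map (x(j := y)) (j # ys) = y # map x ys" by (simp only: list.map m fun_upd_same)
        show ?thesis unfolding e by simp
      qed
      have s2: "(\<forall>i\<in>set (j # ys). P ((x(j := y)) i)) \<longleftrightarrow> P y \<and> (\<forall>i\<in>set ys. P (x i))"
        using f by auto
      have mem: "x(j := y) \<in> S \<longleftrightarrow> P y \<and> x \<in> chainS N ys (\<lambda>z. P z \<and> y < z)"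
        unfolding S_def chainS_def using sp x s1 s2 by (auto simp: A_def)
      show "indicator S (x(j := y)) = ennreal (indicator {z. P z} y) * indicator (chainS N ys (\<lambda>z. P z \<and> y < z)) x"
        using mem by (auto simp: indicator_def)
    qed
    also have "\<dots> = (\<integral>\<^sup>+ y. ennreal (indicator {z. P z} y) * F y \<partial>N j)"
      using Qsets by (intro nn_integral_cong) (simp add: nn_integral_cmult F_def)
    finally show ?thesis .
  qed
  define W where "W c y = ennreal (indicator {z. P z} y * (c ^ n * Vf L H n (max lo y)))" for c y
  have Wm: "W c \<in> borel_measurable borel" for c
    unfolding W_def Vf_def using Pm by measurable
  have Wdens: "(\<integral>\<^sup>+ y. W c y \<partial>N j) = (\<integral>\<^sup>+ y. ennreal (G j y) * W c y \<partial>lborel)" for c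
    unfolding Ndef using Wm Gm by (subst nn_integral_density) auto
  have Vnn: "0 \<le> Vf L H m z" for m z using LH by (simp add: Vf_def)
  define U where "U y = ennreal (indicator {L..H} y / (H - L) * indicator {lo<..} y * Vf L H n y)" for y
  have Um: "U \<in> borel_measurable lborel" unfolding U_def Vf_def by measurable
  have Uint: "(\<integral>\<^sup>+ y. ennreal (c ^ Suc n) * U y \<partial>lborel) = ennreal (c ^ Suc n * Vf L H (Suc n) lo)"
    if "0 \<le> c" for c
  proof -
    have "(\<integral>\<^sup>+ y. ennreal (c ^ Suc n) * U y \<partial>lborel) = ennreal (c ^ Suc n) * (\<integral>\<^sup>+ y. U y \<partial>lborel)"
      by (rule nn_integral_cmult[OF Um])
    also have "(\<integral>\<^sup>+ y. U y \<partial>lborel) = ennreal (Vf L H (Suc n) lo)"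
      unfolding U_def by (rule Vf_int[OF LH])
    also have "ennreal (c ^ Suc n) * ennreal (Vf L H (Suc n) lo) = ennreal (c ^ Suc n * Vf L H (Suc n) lo)"
      using that Vnn by (simp add: ennreal_mult)
    finally show ?thesis .
  qed
  have upper: "emeasure (PiM (insert j A) N) S \<le> ennreal (b ^ Suc n * Vf L H (Suc n) lo)"
  proof -
    have "emeasure (PiM (insert j A) N) S \<le> (\<integral>\<^sup>+ y. W b y \<partial>N j)"
      unfolding E
    proof (intro nn_integral_mono)
      fix y
      have "ennreal (indicator {z. P z} y) * F y \<le> ennreal (indicator {z. P z} y) * ennreal (b ^ n * Vf L H n (max lo y))"
        using IH[of y] by (intro mult_left_mono) auto
      also have "\<dots> = W b y" unfolding W_def by (subst ennreal_mult) (auto simp: b0 Vnn)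
      finally show "ennreal (indicator {z. P z} y) * F y \<le> W b y" .
    qed
    also have "\<dots> = (\<integral>\<^sup>+ y. ennreal (G j y) * W b y \<partial>lborel)" by (rule Wdens)
    also have "\<dots> \<le> (\<integral>\<^sup>+ y. ennreal (b ^ Suc n) * U y \<partial>lborel)"
    proof (intro nn_integral_mono)
      fix y
      have "G j y * (indicator {z. P z} y * (b ^ n * Vf L H n (max lo y))) \<le>
            b ^ Suc n * (indicator {L..H} y / (H - L) * indicator {lo<..} y * Vf L H n y)"
      proof (cases "y \<in> {L..H}")
        case True
        then have Py: "P y = (lo < y)" using Cons.prems(3) by auto
        show ?thesis
        proof (cases "lo < y")
          case True2: True
          then have "max lo y = y" by simp
          moreover have "G j y * (b ^ n * Vf L H n y) \<le> (b / D) * (b ^ n * Vf L H n y)"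
            using Gin_up[OF True] b0 Vnn by (intro mult_right_mono) auto
          ultimately show ?thesis using True True2 Py by (simp add: indicator_def D_def field_simps)
        next
          case False
          then show ?thesis using Py b0 Vnn by (simp add: indicator_def)
        qed
      next
        case False
        then show ?thesis using Gout[OF False] b0 Vnn LH by (simp add: indicator_def)
      qed
      then show "ennreal (G j y) * W b y \<le> ennreal (b ^ Suc n) * U y"
        unfolding W_def U_def using Gnn b0 Vnn LH
        by (subst ennreal_mult[symmetric], simp, simp add: indicator_def)+ (simp add: ennreal_leI)
    qed
    also have "\<dots> = ennreal (b ^ Suc n * Vf L H (Suc n) lo)" by (rule Uint[OF b0])
    finally show ?thesis .
  qed
  have lower: "ennreal (a ^ Suc n * Vf L H (Suc n) lo) \<le> emeasure (PiM (insert j A) N) S"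
  proof -
    have "ennreal (a ^ Suc n * Vf L H (Suc n) lo) = (\<integral>\<^sup>+ y. ennreal (a ^ Suc n) * U y \<partial>lborel)"
      by (rule Uint[OF a0, symmetric])
    also have "\<dots> \<le> (\<integral>\<^sup>+ y. ennreal (G j y) * W a y \<partial>lborel)"
    proof (intro nn_integral_mono)
      fix y
      have "a ^ Suc n * (indicator {L..H} y / (H - L) * indicator {lo<..} y * Vf L H n y) \<le>
            G j y * (indicator {z. P z} y * (a ^ n * Vf L H n (max lo y)))"
      proof (cases "y \<in> {L..H} \<and> lo < y")
        case True
        then have Py: "P y" using Cons.prems(3) by auto
        have "max lo y = y" using True by simp
        moreover have "(a / D) * (a ^ n * Vf L H n y) \<le> G j y * (a ^ n * Vf L H n y)"
          using Gin_low True a0 Vnn by (intro mult_right_mono) auto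
        ultimately show ?thesis using True Py by (simp add: indicator_def D_def field_simps)
      next
        case False
        then show ?thesis using Gnn a0 Vnn by (auto simp: indicator_def)
      qed
      then show "ennreal (a ^ Suc n) * U y \<le> ennreal (G j y) * W a y"
        unfolding W_def U_def using Gnn a0 Vnn LH
        by (subst ennreal_mult[symmetric], simp, simp add: indicator_def)+ (simp add: ennreal_leI)
    qed
    also have "\<dots> = (\<integral>\<^sup>+ y. W a y \<partial>N j)" by (rule Wdens[symmetric])
    also have "\<dots> \<le> emeasure (PiM (insert j A) N) S"
      unfolding E
    proof (intro nn_integral_mono)
      fix y
      have "W a y = ennreal (indicator {z. P z} y) * ennreal (a ^ n * Vf L H n (max lo y))"
        unfolding W_def using a0 Vnn by (simp add: ennreal_mult)
      also have "\<dots> \<le> ennreal (indicator {z. P z} y) * F y"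
        using IH[of y] by (intro mult_left_mono) auto
      finally show "W a y \<le> ennreal (indicator {z. P z} y) * F y" .
    qed
    finally show ?thesis .
  qed
  show ?case using upper lower by (simp add: S_def A_def n_def)
qed

lemma dens_bound:
  fixes g :: "real \<Rightarrow> real" and M fM \<alpha> \<delta> :: real and m :: nat
  assumes gm: "g \<in> borel_measurable borel" and e0: "0 < eps m" and fM0: "0 < fM"
    and \<alpha>0: "0 \<le> \<alpha>" and \<alpha>\<delta>: "\<alpha> \<le> \<delta> * fM" and \<delta>: "\<delta> \<le> 1/2"
    and gb: "\<And>x. x \<in> Iint M m \<Longrightarrow> fM - \<alpha> \<le> g x \<and> g x \<le> fM + \<alpha>"
  shows "(1 - \<delta>) / (1 + \<delta>) * (indicator {M - eps m..M + eps m} x / ((M + eps m) - (M - eps m))) \<le> cdens g M m x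
     \<and> cdens g M m x \<le> (1 + \<delta>) / (1 - \<delta>) * (indicator {M - eps m..M + eps m} x / ((M + eps m) - (M - eps m)))"
proof -
  define e where "e = eps m"
  define I where "I = Iint M m"
  have I: "I = {M - e..M + e}" by (simp add: I_def e_def Iint_def)
  have \<delta>0: "0 \<le> \<delta>"
  proof -
    have "0 \<le> \<delta> * fM" using \<alpha>0 \<alpha>\<delta> by linarith
    then show ?thesis using fM0 by (simp add: zero_le_mult_iff)
  qed
  have le: "M - e \<le> M + e" using e0 by (simp add: e_def)
  have fin_I: "emeasure lborel {M - e..M + e} < \<top>" using le by simp
  have int_g: "set_integrable lborel I g"
    unfolding set_integrable_def I
  proof (rule integrableI_bounded_set_indicator[where B = "fM + \<alpha>"])
    show "AE x\<in>{M - e..M + e} in lborel. norm (g x) \<le> fM + \<alpha>"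
    proof (rule AE_I2, intro impI)
      fix x assume "x \<in> {M - e..M + e}"
      then have "fM - \<alpha> \<le> g x \<and> g x \<le> fM + \<alpha>" using gb by (simp add: I[symmetric] I_def)
      moreover have "fM - \<alpha> \<ge> 0"
      proof -
        have "\<delta> * fM \<le> 1/2 * fM" using \<delta> fM0 by (intro mult_right_mono) auto
        then show ?thesis using \<alpha>\<delta> fM0 by linarith
      qed
      ultimately show "norm (g x) \<le> fM + \<alpha>" by simp
    qed
  qed (use gm fin_I in auto)
  have int_c: "set_integrable lborel I (\<lambda>_. c)" for c :: real
    unfolding set_integrable_def I by (rule integrable_indicator) (use fin_I in auto)
  define p where "p = pmass g M m"
  have p_eq: "p = (LINT x:I|lborel. g x)" by (simp add: p_def pmass_def I_def)
  have p_low: "(fM - \<alpha>) * (2 * e) \<le> p"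
  proof -
    have "(LINT x:I|lborel. fM - \<alpha>) \<le> (LINT x:I|lborel. g x)"
      using int_c int_g gb by (intro set_integral_mono) (auto simp: I_def)
    then show ?thesis using le by (simp add: p_eq I set_integral_const mult.commute)
  qed
  have p_up: "p \<le> (fM + \<alpha>) * (2 * e)"
  proof -
    have "(LINT x:I|lborel. g x) \<le> (LINT x:I|lborel. fM + \<alpha>)"
      using int_c int_g gb by (intro set_integral_mono) (auto simp: I_def)
    then show ?thesis using le by (simp add: p_eq I set_integral_const mult.commute)
  qed
  have e2: "(M + e) - (M - e) = 2 * e" by simp
  show ?thesis
  proof (cases "x \<in> I")
    case True
    have cd: "cdens g M m x = g x / p" using True by (simp add: cdens_def p_def I_def)
    have gx: "fM - \<alpha> \<le> g x \<and> g x \<le> fM + \<alpha>" using gb True by (simp add: I_def)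
    have A1: "fM * (1 - \<delta>) \<le> fM - \<alpha>" using \<alpha>\<delta> by (simp add: algebra_simps)
    have A2: "fM + \<alpha> \<le> fM * (1 + \<delta>)" using \<alpha>\<delta> by (simp add: algebra_simps)
    have pos1: "0 < fM * (1 - \<delta>)" using fM0 \<delta> by simp
    have e0': "0 < e" using e0 by (simp add: e_def)
    have low: "(fM * (1 - \<delta>)) / ((fM * (1 + \<delta>)) * (2 * e)) \<le> g x / p"
    proof (rule frac_le)
      show "0 \<le> g x" using gx A1 pos1 by linarith
      show "fM * (1 - \<delta>) \<le> g x" using gx A1 by linarith
      have "0 < (fM - \<alpha>) * (2 * e)" using pos1 A1 e0' by simp
      then show "0 < p" using p_low by linarith
      have "(fM + \<alpha>) * (2 * e) \<le> (fM * (1 + \<delta>)) * (2 * e)" by (rule mult_right_mono) (use A2 e0' in auto)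
      then show "p \<le> (fM * (1 + \<delta>)) * (2 * e)" using p_up by linarith
    qed
    have up: "g x / p \<le> (fM * (1 + \<delta>)) / ((fM * (1 - \<delta>)) * (2 * e))"
    proof (rule frac_le)
      show "0 \<le> fM * (1 + \<delta>)" using fM0 \<delta>0 by simp
      show "g x \<le> fM * (1 + \<delta>)" using gx A2 by linarith
      show "0 < (fM * (1 - \<delta>)) * (2 * e)" using pos1 e0' by simp
      have "(fM * (1 - \<delta>)) * (2 * e) \<le> (fM - \<alpha>) * (2 * e)" by (rule mult_right_mono) (use A1 e0' in auto)
      then show "(fM * (1 - \<delta>)) * (2 * e) \<le> p" using p_low by linarith
    qed
    have d1: "1 + \<delta> \<noteq> 0" and d2: "1 - \<delta> \<noteq> 0" using \<delta>0 \<delta> by auto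
    have r1: "(fM * (1 - \<delta>)) / ((fM * (1 + \<delta>)) * (2 * e)) = (1 - \<delta>) / (1 + \<delta>) * (1 / (2 * e))"
    proof -
      have "(fM * (1 - \<delta>)) / ((fM * (1 + \<delta>)) * (2 * e)) = (fM * (1 - \<delta>)) / (fM * ((1 + \<delta>) * (2 * e)))"
        by (simp only: mult.assoc)
      also have "\<dots> = (1 - \<delta>) / ((1 + \<delta>) * (2 * e))"
        using fM0 by (intro mult_divide_mult_cancel_left) simp
      also have "\<dots> = (1 - \<delta>) / (1 + \<delta>) * (1 / (2 * e))" by simp
      finally show ?thesis .
    qed
    have r2: "(fM * (1 + \<delta>)) / ((fM * (1 - \<delta>)) * (2 * e)) = (1 + \<delta>) / (1 - \<delta>) * (1 / (2 * e))"
    proof -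
      have "(fM * (1 + \<delta>)) / ((fM * (1 - \<delta>)) * (2 * e)) = (fM * (1 + \<delta>)) / (fM * ((1 - \<delta>) * (2 * e)))"
        by (simp only: mult.assoc)
      also have "\<dots> = (1 + \<delta>) / ((1 - \<delta>) * (2 * e))"
        using fM0 by (intro mult_divide_mult_cancel_left) simp
      also have "\<dots> = (1 + \<delta>) / (1 - \<delta>) * (1 / (2 * e))" by simp
      finally show ?thesis .
    qed
    have ind: "indicator {M - eps m..M + eps m} x / ((M + eps m) - (M - eps m)) = 1 / (2 * e)"
      using True by (simp add: I_def Iint_def e_def)
    show ?thesis unfolding ind cd using low up r1 r2 by simp
  next
    case False
    have z: "indicator {M - eps m..M + eps m} x = (0::real)" using False by (simp add: I_def Iint_def)
    have c: "cdens g M m x = 0" using False by (simp add: cdens_def I_def)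
    show ?thesis unfolding z c by simp
  qed
qed

lemma sorted_perm_iff:
  fixes x :: "nat \<Rightarrow> real"
  shows "sorted_wrt (<) (map x (map \<rho> [1..<Suc k])) \<longleftrightarrow> (\<forall>i\<in>{1..<k}. x (\<rho> i) < x (\<rho> (Suc i)))"
proof -
  have tr: "transp ((<) :: real \<Rightarrow> real \<Rightarrow> bool)" by (auto simp: transp_def)
  have nth: "map x (map \<rho> [1..<Suc k]) ! i = x (\<rho> (Suc i))" if "i < k" for i
    using that by (simp add: nth_map del: upt_Suc)
  have "sorted_wrt (<) (map x (map \<rho> [1..<Suc k])) \<longleftrightarrow> (\<forall>i. Suc i < k \<longrightarrow> x (\<rho> (Suc i)) < x (\<rho> (Suc (Suc i))))"
    by (simp add: sorted_wrt_iff_nth_Suc_transp[OF tr] nth del: upt_Suc)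
  also have "\<dots> \<longleftrightarrow> (\<forall>i\<in>{1..<k}. x (\<rho> i) < x (\<rho> (Suc i)))"
  proof
    assume h: "\<forall>i. Suc i < k \<longrightarrow> x (\<rho> (Suc i)) < x (\<rho> (Suc (Suc i)))"
    show "\<forall>i\<in>{1..<k}. x (\<rho> i) < x (\<rho> (Suc i))"
    proof
      fix j assume j: "j \<in> {1..<k}"
      then have "j = Suc (j - 1)" by simp
      then show "x (\<rho> j) < x (\<rho> (Suc j))" using h[rule_format, of "j - 1"] j by simp
    qed
  next
    assume h: "\<forall>i\<in>{1..<k}. x (\<rho> i) < x (\<rho> (Suc i))"
    show "\<forall>i. Suc i < k \<longrightarrow> x (\<rho> (Suc i)) < x (\<rho> (Suc (Suc i)))"
      using h by simp
  qed
  finally show ?thesis .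
qed

lemma order_bound:
  fixes N :: "nat \<Rightarrow> real measure" and G :: "nat \<Rightarrow> real \<Rightarrow> real" and L H a b :: real
  assumes LH: "L < H"
    and Ndef: "\<And>i. N i = density lborel (\<lambda>x. ennreal (G i x))"
    and Gm: "\<And>i. G i \<in> borel_measurable borel"
    and lowb: "\<And>i x. a * (indicator {L..H} x / (H - L)) \<le> G i x"
    and upb: "\<And>i x. G i x \<le> b * (indicator {L..H} x / (H - L))"
    and a0: "0 \<le> a" and b0: "0 \<le> b"
    and perm: "\<rho> permutes {1..k}"
  shows "a ^ k / fact k \<le> measure (PiM {1..k} N) {x \<in> space (PiM {1..k} N). \<forall>i\<in>{1..<k}. x (\<rho> i) < x (\<rho> (Suc i))}
     \<and> measure (PiM {1..k} N) {x \<in> space (PiM {1..k} N). \<forall>i\<in>{1..<k}. x (\<rho> i) < x (\<rho> (Suc i))} \<le> b ^ k / fact k"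
proof -
  define xs where "xs = map \<rho> [1..<Suc k]"
  have setxs: "set xs = {1..k}"
  proof -
    have "set xs = \<rho> ` {1..<Suc k}" by (simp add: xs_def del: upt_Suc)
    also have "{1..<Suc k} = {1..k}" by (rule atLeastLessThanSuc_atLeastAtMost)
    also have "\<rho> ` {1..k} = {1..k}" by (rule permutes_image[OF perm])
    finally show ?thesis .
  qed
  have dxs: "distinct xs"
    unfolding xs_def using permutes_inj[OF perm] by (simp add: distinct_map inj_on_subset[of \<rho> UNIV])
  have lxs: "length xs = k" by (simp add: xs_def)
  define T where "T = {x \<in> space (PiM {1..k} N). \<forall>i\<in>{1..<k}. x (\<rho> i) < x (\<rho> (Suc i))}"
  have chT: "chainS N xs (\<lambda>_. True) = T"
    unfolding chainS_def T_def setxs using sorted_perm_iff[of _ \<rho> k] by (simp add: xs_def)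
  have vf: "Vf L H k (L - 1) = 1 / fact k" using LH by (simp add: Vf_def)
  have c: "ennreal (a ^ k * (1 / fact k)) \<le> emeasure (PiM {1..k} N) T \<and> emeasure (PiM {1..k} N) T \<le> ennreal (b ^ k * (1 / fact k))"
    using core[where N=N and G=G and L=L and H=H and a=a and b=b and xs=xs and P="\<lambda>_. True" and lo="L - 1", OF LH Ndef Gm lowb upb a0] dxs
    by (simp add: setxs lxs chT vf)
  have "emeasure (PiM {1..k} N) T \<noteq> \<top>" using c by (metis ennreal_neq_top neq_top_trans)
  then have eq: "emeasure (PiM {1..k} N) T = ennreal (measure (PiM {1..k} N) T)"
    by (rule emeasure_eq_ennreal_measure)
  have "a ^ k / fact k \<le> measure (PiM {1..k} N) T"
    using c unfolding eq by (simp add: ennreal_le_iff)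
  moreover have "measure (PiM {1..k} N) T \<le> b ^ k / fact k"
    using c b0 unfolding eq by (simp add: ennreal_le_iff)
  ultimately show ?thesis by (simp add: T_def)
qed



theorem lemma5:
  fixes f :: "nat \<Rightarrow> real \<Rightarrow> real" and r :: nat and M c eps1 :: real
  assumes meas: "\<And>t. t \<in> {1..r} \<Longrightarrow> f t \<in> borel_measurable borel"
    and nonneg: "\<And>t x. t \<in> {1..r} \<Longrightarrow> f t x \<ge> 0"
    and total: "\<And>t. t \<in> {1..r} \<Longrightarrow> (\<integral>\<^sup>+ x. ennreal (f t x) \<partial>lborel) = 1"
    and posM: "\<And>t. t \<in> {1..r} \<Longrightarrow> f t M > 0"
    and c: "c \<ge> 0" and eps1: "eps1 > 0"
    and smooth: "\<And>t x. t \<in> {1..r} \<Longrightarrow> x \<in> {M - eps1 .. M + eps1} \<Longrightarrow>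
                   \<bar>f t x - f t M\<bar> \<le> c * (x - M)\<^sup>2"
    and A: "A > (0::real)"
  shows "\<exists>C>0. \<exists>m0::nat. \<forall>m\<ge>m0. \<forall>k::nat. real k \<le> A * real m powr (5/8) \<longrightarrow>
           (\<forall>th. (\<forall>i\<in>{1..k}. th i \<in> {1..r}) \<longrightarrow>
             (\<forall>\<rho>. \<rho> permutes {1..k} \<longrightarrow>
               \<bar>order_prob f M m k th \<rho> - 1 / fact k\<bar> \<le> C * real m powr (-1/8) / fact k))"
proof -
  define F0 where "F0 = (\<lambda>t. f t M) ` {1..r}"
  define fmin where "fmin = Min (insert 1 F0)"
  have finF0: "finite (insert 1 F0)" by (simp add: F0_def)
  have fmin_pos: "0 < fmin"
    unfolding fmin_def using finF0 posM by (subst Min_gr_iff) (auto simp: F0_def)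
  have fmin_le: "fmin \<le> f t M" if "t \<in> {1..r}" for t
    unfolding fmin_def using finF0 that by (intro Min_le) (auto simp: F0_def)
  define K where "K = c * A / fmin"
  have K0: "0 \<le> K" using c A fmin_pos by (simp add: K_def)
  define \<eta> where "\<eta> = min (min 1 eps1) (min (fmin / (2 * c + 1)) (1 / (8 * K + 1)))"
  have \<eta>0: "0 < \<eta>" using eps1 fmin_pos c K0 by (simp add: \<eta>_def)
  define m0 where "m0 = nat \<lceil>\<eta> powr (-8)\<rceil> + 1"
  define C where "C = 8 * K + 1"
  have C0: "0 < C" using K0 by (simp add: C_def)
  show ?thesis
  proof (intro exI[of _ C] conjI C0 exI[of _ m0] allI impI)
    fix m k th \<rho>
    assume mm0: "m0 \<le> m" and hk: "real k \<le> A * real m powr (5/8)"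
      and hth: "\<forall>i\<in>{1..k}. th i \<in> {1..r}" and perm: "\<rho> permutes {1..k}"
    show "\<bar>order_prob f M m k th \<rho> - 1 / fact k\<bar> \<le> C * real m powr (-1/8) / fact k"
    proof -
      have m_pos: "0 < real m" using mm0 by (simp add: m0_def)
      have m_ge: "\<eta> powr (-8) \<le> real m"
      proof -
        have "\<eta> powr (-8) \<le> real (nat \<lceil>\<eta> powr (-8)\<rceil>)" by linarith
        also have "\<dots> \<le> real m" using mm0 by (simp add: m0_def)
        finally show ?thesis .
      qed
      define s where "s = real m powr (-1/8)"
      have s0: "0 < s" using m_pos by (simp add: s_def)
      have s\<eta>: "s \<le> \<eta>"
      proof -
        have "s \<le> (\<eta> powr (-8)) powr (-1/8)"
          unfolding s_def by (rule powr_mono2') (use \<eta>0 m_ge in auto)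
        also have "\<dots> = \<eta>" using \<eta>0 by (simp add: powr_powr)
        finally show ?thesis .
      qed
      have s1: "s \<le> 1" and seps: "s \<le> eps1" and sf: "s \<le> fmin / (2 * c + 1)" and sK: "s \<le> 1 / (8 * K + 1)"
        using s\<eta> by (auto simp: \<eta>_def)
      have e_eq: "eps m = s ^ 3"
      proof -
        have "s ^ 3 = s powr 3" using s0 by (simp add: powr_numeral)
        also have "\<dots> = real m powr (-3/8)" unfolding s_def using m_pos by (simp add: powr_powr)
        finally show ?thesis by (simp add: eps_def)
      qed
      have m58: "real m powr (5/8) = 1 / s ^ 5"
      proof -
        have "s ^ 5 = s powr 5" using s0 by (simp add: powr_numeral)
        also have "\<dots> = real m powr (-5/8)" unfolding s_def using m_pos by (simp add: powr_powr)
        also have "\<dots> = 1 / real m powr (5/8)" by (simp add: powr_minus_divide)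
        finally show ?thesis using m_pos by simp
      qed
      define e where "e = eps m"
      have e0: "0 < e" using s0 e_eq by (simp add: e_def)
      have es: "e \<le> s"
      proof -
        have "s ^ 3 \<le> s ^ 1" using s0 s1 by (intro power_decreasing) auto
        then show ?thesis by (simp add: e_def e_eq)
      qed
      define \<delta> where "\<delta> = c * e^2 / fmin"
      have \<delta>0: "0 \<le> \<delta>" using c fmin_pos by (simp add: \<delta>_def)
      have s6: "s ^ 6 \<le> s"
      proof -
        have "s ^ 6 \<le> s ^ 1" using s0 s1 by (intro power_decreasing) auto
        then show ?thesis by simp
      qed
      have e2: "e ^ 2 = s ^ 6" by (simp add: e_def e_eq flip: power_mult)
      have \<delta>half: "\<delta> \<le> 1/2"
      proof -
        have "c * e^2 \<le> c * s" using s6 c e2 by (simp add: mult_left_mono)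
        also have "\<dots> \<le> c * (fmin / (2 * c + 1))" by (rule mult_left_mono) (use sf c in auto)
        also have "\<dots> \<le> fmin / 2" using c fmin_pos by (simp add: field_simps)
        finally show ?thesis using fmin_pos by (simp add: \<delta>_def field_simps)
      qed
      have \<delta>k: "\<delta> * k \<le> K * s"
      proof -
        have "k \<le> A / s ^ 5" using hk m58 by simp
        then have "\<delta> * k \<le> \<delta> * (A / s ^ 5)" using \<delta>0 by (rule mult_left_mono)
        also have "\<dots> = K * s" using s0 fmin_pos unfolding \<delta>_def K_def e2 by (simp add: field_simps power_eq_if)
        finally show ?thesis .
      qed
      define a where "a = (1 - \<delta>) / (1 + \<delta>)"
      define b where "b = (1 + \<delta>) / (1 - \<delta>)"
      have a0: "0 \<le> a" and a1: "a \<le> 1" using \<delta>0 \<delta>half by (auto simp: a_def field_simps)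
      have b1: "1 \<le> b" using \<delta>0 \<delta>half by (auto simp: b_def field_simps)
      have b0: "0 \<le> b" using b1 by simp
      define L where "L = M - eps m"
      define H where "H = M + eps m"
      have LH: "L < H" using e0 by (simp add: L_def H_def e_def)
      define G where "G i = (if i \<in> {1..k} then cdens (f (th i)) M m else (\<lambda>x. indicator {L..H} x / (H - L)))" for i
      define N where "N i = density lborel (\<lambda>x. ennreal (G i x))" for i
      have GF: "G i x = indicator {L..H} x / (H - L)" if "i \<notin> {1..k}" for i x
        unfolding G_def if_not_P[OF that] by (rule refl)
      have GT: "G i x = cdens (f (th i)) M m x" if "i \<in> {1..k}" for i x
        unfolding G_def if_P[OF that] by (rule refl)
      have dens: "a * (indicator {L..H} x / (H - L)) \<le> cdens (f t) M m x \<and> cdens (f t) M m x \<le> b * (indicator {L..H} x / (H - L))"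
        if t: "t \<in> {1..r}" for t x
        unfolding a_def b_def L_def H_def
      proof (rule dens_bound[where fM = "f t M" and \<alpha> = "c * e^2"])
        show "f t \<in> borel_measurable borel" by (rule meas[OF t])
        show "0 < eps m" using e0 by (simp add: e_def)
        show "0 < f t M" by (rule posM[OF t])
        show "0 \<le> c * e^2" using c by simp
        have "c * e^2 = \<delta> * fmin" using fmin_pos by (simp add: \<delta>_def)
        also have "\<dots> \<le> \<delta> * f t M" using fmin_le[OF t] \<delta>0 by (simp add: mult_left_mono)
        finally show "c * e^2 \<le> \<delta> * f t M" .
        show "\<delta> \<le> 1/2" by (rule \<delta>half)
        fix y assume y: "y \<in> Iint M m"
        then have ye: "\<bar>y - M\<bar> \<le> e" by (auto simp: Iint_def e_def abs_le_iff)
        have "y \<in> {M - eps1 .. M + eps1}" using ye es seps by (auto simp: abs_le_iff)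
        then have h: "\<bar>f t y - f t M\<bar> \<le> c * (y - M)^2" by (rule smooth[OF t])
        have "(y - M)^2 \<le> e^2"
        proof -
          have "\<bar>y - M\<bar>^2 \<le> e^2" using ye by (intro power_mono) auto
          then show ?thesis by simp
        qed
        then have "c * (y - M)^2 \<le> c * e^2" using c by (simp add: mult_left_mono)
        then show "f t M - c * e^2 \<le> f t y \<and> f t y \<le> f t M + c * e^2" using h by (auto simp: abs_le_iff)
      qed
      have Gm: "G i \<in> borel_measurable borel" for i
      proof (cases "i \<in> {1..k}")
        case True
        then have t: "th i \<in> {1..r}" using hth by auto
        have [measurable]: "f (th i) \<in> borel_measurable borel" by (rule meas[OF t])
        show ?thesis using True unfolding G_def cdens_def Iint_def by simp
      next
        case False
        have "G i = (\<lambda>x. indicator {L..H} x / (H - L))" unfolding G_def if_not_P[OF False] by (rule refl)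
        then show ?thesis by simp
      qed
      have lowb: "a * (indicator {L..H} x / (H - L)) \<le> G i x" for i x
      proof (cases "i \<in> {1..k}")
        case True
        then show ?thesis using dens[of "th i" x] hth by (simp add: GT)
      next
        case False
        have "0 \<le> indicator {L..H} x / (H - L)" using LH by simp
        then have "a * (indicator {L..H} x / (H - L)) \<le> 1 * (indicator {L..H} x / (H - L))"
          using a1 by (intro mult_right_mono) auto
        then show ?thesis by (simp only: GF[OF False] mult_1)
      qed
      have upb: "G i x \<le> b * (indicator {L..H} x / (H - L))" for i x
      proof (cases "i \<in> {1..k}")
        case True
        then show ?thesis using dens[of "th i" x] hth by (simp add: GT)
      next
        case False
        have "0 \<le> indicator {L..H} x / (H - L)" using LH by simp
        then have "1 * (indicator {L..H} x / (H - L)) \<le> b * (indicator {L..H} x / (H - L))"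
          using b1 by (intro mult_right_mono) auto
        then show ?thesis by (simp only: GF[OF False] mult_1)
      qed
      have jl: "joint_law f M m k th = PiM {1..k} N"
        unfolding joint_law_def by (rule PiM_cong) (auto simp: N_def GT)
      have ob: "a ^ k / fact k \<le> order_prob f M m k th \<rho> \<and> order_prob f M m k th \<rho> \<le> b ^ k / fact k"
        unfolding order_prob_def jl
        by (rule order_bound[OF LH N_def Gm lowb upb a0 b0 perm])
      have pos: "0 < 1 - \<delta>" using \<delta>half by simp
      have dd: "\<delta> * \<delta> \<le> \<delta> * (1/2)" using \<delta>0 \<delta>half by (rule mult_left_mono[rotated])
      have bb: "b \<le> 1 + 4 * \<delta>"
      proof -
        have eq: "(1 + 4 * \<delta>) * (1 - \<delta>) = 1 + 3 * \<delta> - 4 * (\<delta> * \<delta>)" by (simp add: algebra_simps)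
        have "1 + \<delta> \<le> (1 + 4 * \<delta>) * (1 - \<delta>)" unfolding eq using dd by linarith
        then show ?thesis unfolding b_def using pos by (simp add: pos_divide_le_eq)
      qed
      have aa: "1 - 2 * \<delta> \<le> a"
      proof -
        have eq: "(1 - 2 * \<delta>) * (1 + \<delta>) = 1 - \<delta> - 2 * (\<delta> * \<delta>)" by (simp add: algebra_simps)
        have "(1 - 2 * \<delta>) * (1 + \<delta>) \<le> 1 - \<delta>" unfolding eq using \<delta>0 by (simp add: mult_nonneg_nonneg)
        then show ?thesis unfolding a_def using \<delta>0 by (simp add: pos_le_divide_eq)
      qed
      have Ks: "4 * K * s \<le> 1/2"
      proof -
        have "(8 * K + 1) * s \<le> 1" using sK K0 by (simp add: pos_le_divide_eq mult.commute)
        then show ?thesis using s0 by (simp add: algebra_simps)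
      qed
      have upper: "b ^ k - 1 \<le> C * s"
      proof -
        have "b ^ k \<le> (1 + 4 * \<delta>) ^ k" using b0 bb by (rule power_mono[rotated])
        also have "\<dots> \<le> exp (4 * \<delta>) ^ k" using \<delta>0 by (intro power_mono) (auto simp: exp_ge_add_one_self add_nonneg_nonneg)
        also have "\<dots> = exp (real k * (4 * \<delta>))" by (simp add: exp_of_nat_mult)
        also have "\<dots> \<le> exp (4 * K * s)" using \<delta>k by (simp add: mult.commute)
        also have "\<dots> \<le> 1 + 2 * (4 * K * s)"
          using exp_bound_lemma[of "4 * K * s"] Ks K0 s0 by simp
        finally show ?thesis unfolding C_def using s0 by (simp add: algebra_simps)
      qed
      have lower: "1 - a ^ k \<le> C * s"
      proof -
        have "1 + real k * (- 2 * \<delta>) \<le> (1 + (- 2 * \<delta>)) ^ k" using \<delta>half by (intro Bernoulli_inequality) simp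
        also have "\<dots> \<le> a ^ k" using aa \<delta>half by (intro power_mono) auto
        finally have "1 - a ^ k \<le> 2 * (\<delta> * k)" by (simp add: algebra_simps)
        also have "\<dots> \<le> 2 * (K * s)" using \<delta>k by simp
        also have "\<dots> \<le> C * s" unfolding C_def using s0 K0 by (simp add: algebra_simps)
        finally show ?thesis .
      qed
      have fk: "0 < (fact k :: real)" by simp
      define P where "P = order_prob f M m k th \<rho>"
      have "P - 1 / fact k \<le> (b ^ k - 1) / fact k" using ob by (simp add: P_def diff_divide_distrib)
      also have "\<dots> \<le> C * s / fact k" using upper fk by (simp add: divide_right_mono)
      finally have u: "P - 1 / fact k \<le> C * s / fact k" .
      have "1 / fact k - P \<le> (1 - a ^ k) / fact k" using ob by (simp add: P_def diff_divide_distrib)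
      also have "\<dots> \<le> C * s / fact k" using lower fk by (simp add: divide_right_mono)
      finally have l: "1 / fact k - P \<le> C * s / fact k" .
      show ?thesis using u l unfolding P_def s_def by (simp add: abs_le_iff)
    qed
  qed
qed

end
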